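(* Let $\alpha\in(0,1)$, let $p_X$ be a distribution on a finite set $\mathcal X$ and $p_{Y\mid X}$ a channel to a finite set $\mathcal Y$. Let $\tilde q^{(0)}_{X,Y}$ be an initial joint distribution on $\mathcal X\times\mathcal Y$ and for $k\ge0$ define $q_Y^{(k)}(y)=\sum_x\tilde q^{(k)}_{X,Y}(x,y)$ and $\tilde q^{(k+1)}_{X,Y}(x,y)=\bar q_X(x)\bar q_{Y\mid X}(y\mid x)$ where $$\bar q_X(x)=\frac{p_X(x)\big(\sum_yp_{Y\mid X}(y\mid x)^\alpha q^{(k)}_Y(y)^{1-\alpha}\big)^{1/\alpha}}{\sum_{x'}p_X(x')\big(\sum_yp_{Y\mid X}(y\mid x')^\alpha q^{(k)}_Y(y)^{1-\alpha}\big)^{1/\alpha}},\qquad \bar q_{Y\mid X}(y\mid x)=\frac{p_{Y\mid X}(y\mid x)^\alpha q^{(k)}_Y(y)^{1-\alpha}}{\sum_{y'}p_{Y\mid X}(y'\mid x)^\alpha q^{(k)}_Y(y')^{1-\alpha}}.$$ Then $$F_\alpha^{\mathrm{LP}}(\tilde q^{(0)}_{X,Y},q_Y^{(0)})\ge F_\alpha^{\mathrm{LP}}(\tilde q^{(1)}_{X,Y},q_Y^{(0)})\ge\cdots\ge F_\alpha^{\mathrm{LP}}(\tilde q^{(k)}_{X,Y},q_Y^{(k)})\ge F_\alpha^{\mathrm{LP}}(\tilde q^{(k+1)}_{X,Y},q_Y^{(k)})\ge\cdots\ge I_\alpha^{\mathrm{LP}}(X;Y).$$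
   Context: $\log$ is natural and $D$ is the Kullback–Leibler divergence. For a joint distribution $\tilde q_{X,Y}=\tilde q_X\tilde q_{Y\mid X}$ and a distribution $q_Y$ on $\mathcal Y$, $F_\alpha^{\mathrm{LP}}(\tilde q_{X,Y},q_Y):=\frac{\alpha}{1-\alpha}D(\tilde q_{X,Y}\|\tilde q_Xp_{Y\mid X})+D(\tilde q_X\tilde q_{Y\mid X}\|\tilde q_Xq_Y)+\frac{\alpha}{1-\alpha}D(\tilde q_X\|p_X)$. The Lapidoth–Pfister mutual information is $I_\alpha^{\mathrm{LP}}(X;Y):=\min_{q_X}\min_{q_Y}D_\alpha(p_Xp_{Y\mid X}\|q_Xq_Y)$ with $D_\alpha(p\|q):=\frac{1}{\alpha-1}\log\sum_zp(z)^\alpha q(z)^{1-\alpha}$. *)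

theory Defs
  imports Complex_Main "HOL-Library.Extended_Real"
begin

definition is_dist :: "('z::finite \<Rightarrow> real) \<Rightarrow> bool" where
  "is_dist P \<longleftrightarrow> (\<forall>z. 0 \<le> P z) \<and> (\<Sum>z\<in>UNIV. P z) = 1"

text \<open>A channel p_{Y|X}: W x y = p_{Y|X}(y|x).\<close>
definition is_channel :: "('x::finite \<Rightarrow> 'y::finite \<Rightarrow> real) \<Rightarrow> bool" where
  "is_channel W \<longleftrightarrow> (\<forall>x. is_dist (W x))"

definition KL :: "('z::finite \<Rightarrow> real) \<Rightarrow> ('z \<Rightarrow> real) \<Rightarrow> ereal" where
  "KL P Q = (\<Sum>z\<in>UNIV. if P z = 0 then 0
                        else if Q z = 0 then \<infinity>
                        else ereal (P z * ln (P z / Q z)))"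

definition margX :: "('x::finite \<times> 'y::finite \<Rightarrow> real) \<Rightarrow> 'x \<Rightarrow> real" where
  "margX q x = (\<Sum>y\<in>UNIV. q (x, y))"

definition margY :: "('x::finite \<times> 'y::finite \<Rightarrow> real) \<Rightarrow> 'y \<Rightarrow> real" where
  "margY q y = (\<Sum>x\<in>UNIV. q (x, y))"

definition F_LP :: "real \<Rightarrow> ('x::finite \<Rightarrow> real) \<Rightarrow> ('x \<Rightarrow> 'y::finite \<Rightarrow> real)
    \<Rightarrow> ('x \<times> 'y \<Rightarrow> real) \<Rightarrow> ('y \<Rightarrow> real) \<Rightarrow> ereal" where
  "F_LP \<alpha> pX W qt qY =
     ereal (\<alpha> / (1 - \<alpha>)) * KL qt (\<lambda>(x, y). margX qt x * W x y)
   + KL qt (\<lambda>(x, y). margX qt x * qY y)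
   + ereal (\<alpha> / (1 - \<alpha>)) * KL (margX qt) pX"

text \<open>Renyi divergence D_alpha(p||q) = 1/(alpha-1) log sum p^alpha q^(1-alpha), for alpha in (0,1);
  the value is +infinity when the sum vanishes (log 0 = -infinity).\<close>
definition renyi_div :: "real \<Rightarrow> ('z::finite \<Rightarrow> real) \<Rightarrow> ('z \<Rightarrow> real) \<Rightarrow> ereal" where
  "renyi_div \<alpha> P Q =
     (let S = (\<Sum>z\<in>UNIV. P z powr \<alpha> * Q z powr (1 - \<alpha>))
      in if S = 0 then \<infinity> else ereal (1 / (\<alpha> - 1) * ln S))"

text \<open>Lapidoth--Pfister mutual information (the minimum is the infimum, which is attained).\<close>
definition I_LP :: "real \<Rightarrow> ('x::finite \<Rightarrow> real) \<Rightarrow> ('x \<Rightarrow> 'y::finite \<Rightarrow> real) \<Rightarrow> ereal" where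
  "I_LP \<alpha> pX W =
     (INF qX \<in> {qX. is_dist qX}. INF qY \<in> {qY. is_dist qY}.
        renyi_div \<alpha> (\<lambda>(x, y). pX x * W x y) (\<lambda>(x, y). qX x * qY y))"

definition LP_inner :: "real \<Rightarrow> ('x::finite \<Rightarrow> 'y::finite \<Rightarrow> real) \<Rightarrow> ('y \<Rightarrow> real) \<Rightarrow> 'x \<Rightarrow> real" where
  "LP_inner \<alpha> W qY x = (\<Sum>y\<in>UNIV. W x y powr \<alpha> * qY y powr (1 - \<alpha>))"

definition LP_norm :: "real \<Rightarrow> ('x::finite \<Rightarrow> real) \<Rightarrow> ('x \<Rightarrow> 'y::finite \<Rightarrow> real) \<Rightarrow> ('y \<Rightarrow> real) \<Rightarrow> real" where
  "LP_norm \<alpha> pX W qY = (\<Sum>x\<in>UNIV. pX x * LP_inner \<alpha> W qY x powr (1 / \<alpha>))"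

definition LP_step :: "real \<Rightarrow> ('x::finite \<Rightarrow> real) \<Rightarrow> ('x \<Rightarrow> 'y::finite \<Rightarrow> real) \<Rightarrow> ('y \<Rightarrow> real)
    \<Rightarrow> 'x \<times> 'y \<Rightarrow> real" where
  "LP_step \<alpha> pX W qY = (\<lambda>(x, y).
     (pX x * LP_inner \<alpha> W qY x powr (1 / \<alpha>) / LP_norm \<alpha> pX W qY)
     * (W x y powr \<alpha> * qY y powr (1 - \<alpha>) / LP_inner \<alpha> W qY x))"

primrec LP_iter :: "real \<Rightarrow> ('x::finite \<Rightarrow> real) \<Rightarrow> ('x \<Rightarrow> 'y::finite \<Rightarrow> real) \<Rightarrow> ('x \<times> 'y \<Rightarrow> real)
    \<Rightarrow> nat \<Rightarrow> 'x \<times> 'y \<Rightarrow> real" where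
  "LP_iter \<alpha> pX W q0 0 = q0"
| "LP_iter \<alpha> pX W q0 (Suc k) = LP_step \<alpha> pX W (margY (LP_iter \<alpha> pX W q0 k))"

end

theory Submission
  imports Defs
begin

lemma KL_fin:
  assumes "\<forall>z. P z \<noteq> 0 \<longrightarrow> Q z \<noteq> 0"
  shows "KL P Q = ereal (\<Sum>z\<in>UNIV. P z * ln (P z / Q z))"
proof -
  have "KL P Q = (\<Sum>z\<in>UNIV. ereal (P z * ln (P z / Q z)))"
    unfolding KL_def using assms by (intro sum.cong) auto
  then show ?thesis by simp
qed

lemma KL_inf:
  assumes "P z \<noteq> 0" "Q z = 0"
  shows "KL P Q = \<infinity>"
proof -
  have "(if P z = 0 then 0 else if Q z = 0 then \<infinity> else ereal (P z * ln (P z / Q z))) = \<infinity>"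
    using assms by simp
  then show ?thesis unfolding KL_def sum_Pinfty using finite_UNIV by blast
qed

lemma sum_nminf: "finite A \<Longrightarrow> (\<And>z. f z \<noteq> -\<infinity>) \<Longrightarrow> sum (f :: 'a \<Rightarrow> ereal) A \<noteq> -\<infinity>"
proof (induction A rule: finite_induct)
  case (insert x F)
  then show ?case by (simp add: ereal_plus_eq_MInfty)
qed simp

lemma KL_nminf: "KL P Q \<noteq> -\<infinity>"
proof -
  have h: "(if a then 0 else if b then \<infinity> else ereal c) \<noteq> - (\<infinity>::ereal)" for a b c
    by (cases a; cases b; simp)
  show ?thesis unfolding KL_def by (rule sum_nminf[OF finite_UNIV h])
qed

lemma sum_pair: "(\<Sum>z\<in>(UNIV::('a::finite \<times> 'b::finite) set). f z) = (\<Sum>x\<in>UNIV. \<Sum>y\<in>UNIV. f (x, y))"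
proof -
  have u: "(UNIV::('a \<times> 'b) set) = UNIV \<times> UNIV" by simp
  show ?thesis using sum.cartesian_product[of "\<lambda>x y. f (x,y)" UNIV UNIV]
    by (subst u) (simp add: case_prod_beta')
qed

lemma gibbs:
  fixes P Q :: "'z::finite \<Rightarrow> real"
  assumes "\<forall>z. 0 \<le> P z" "\<forall>z. 0 \<le> Q z" "\<forall>z. P z \<noteq> 0 \<longrightarrow> Q z \<noteq> 0"
    and "sum Q UNIV \<le> sum P UNIV"
  shows "0 \<le> (\<Sum>z\<in>UNIV. P z * ln (P z / Q z))"
proof -
  have "P z - Q z \<le> P z * ln (P z / Q z)" for z
  proof (cases "P z = 0")
    case True then show ?thesis using assms by auto
  next
    case False
    then have p: "P z > 0" and q: "Q z > 0" using assms by (auto simp: order_less_le)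
    have "ln (Q z / P z) \<le> Q z / P z - 1" using p q by (intro ln_le_minus_one) auto
    then have "P z * ln (Q z / P z) \<le> P z * (Q z / P z - 1)" using p by (intro mult_left_mono) auto
    moreover have "ln (P z / Q z) = - ln (Q z / P z)" using p q by (simp add: ln_div)
    moreover have "P z * (Q z / P z - 1) = Q z - P z" using p by (simp add: field_simps)
    ultimately show ?thesis by simp
  qed
  then have "(\<Sum>z\<in>UNIV. P z - Q z) \<le> (\<Sum>z\<in>UNIV. P z * ln (P z / Q z))" by (intro sum_mono) auto
  then show ?thesis using sum_subtractf[of P Q UNIV] assms(4) by linarith
qed

definition qbX :: "real \<Rightarrow> ('x::finite \<Rightarrow> real) \<Rightarrow> ('x \<Rightarrow> 'y::finite \<Rightarrow> real) \<Rightarrow> ('y \<Rightarrow> real) \<Rightarrow> 'x \<Rightarrow> real" where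
  "qbX \<alpha> pX W qY x = pX x * LP_inner \<alpha> W qY x powr (1 / \<alpha>) / LP_norm \<alpha> pX W qY"

definition gb :: "real \<Rightarrow> ('x::finite \<Rightarrow> 'y::finite \<Rightarrow> real) \<Rightarrow> ('y \<Rightarrow> real) \<Rightarrow> 'x \<Rightarrow> 'y \<Rightarrow> real" where
  "gb \<alpha> W qY x y = W x y powr \<alpha> * qY y powr (1 - \<alpha>) / LP_inner \<alpha> W qY x"

lemma step_eq: "LP_step \<alpha> pX W qY z = qbX \<alpha> pX W qY (fst z) * gb \<alpha> W qY (fst z) (snd z)"
  by (cases z) (simp add: LP_step_def qbX_def gb_def)

lemma inner_nonneg: "0 \<le> LP_inner \<alpha> W qY x"
  unfolding LP_inner_def by (intro sum_nonneg) simp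

lemma inner_pos:
  assumes "W x y > 0" "qY y > 0" "\<forall>y. 0 \<le> qY y" "\<forall>x y. 0 \<le> W x y"
  shows "0 < LP_inner \<alpha> W qY x"
proof -
  have "0 < W x y powr \<alpha> * qY y powr (1 - \<alpha>)" using assms by simp
  also have "\<dots> \<le> LP_inner \<alpha> W qY x" unfolding LP_inner_def
    by (rule member_le_sum[where f="\<lambda>y. W x y powr \<alpha> * qY y powr (1 - \<alpha>)"]) auto
  finally show ?thesis .
qed

lemma margX_nonneg: "\<forall>z. 0 \<le> q z \<Longrightarrow> 0 \<le> margX q x"
  unfolding margX_def by (intro sum_nonneg) auto

lemma margX_ge: "\<forall>z. 0 \<le> q z \<Longrightarrow> q (x, y) \<le> margX q x"
  unfolding margX_def by (rule member_le_sum[where f="\<lambda>y. q (x, y)"]) auto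

lemma margY_ge: "\<forall>z. 0 \<le> q z \<Longrightarrow> q (x, y) \<le> margY q y"
  unfolding margY_def by (rule member_le_sum[where f="\<lambda>x. q (x, y)"]) auto

lemma sum_margX: "(\<Sum>x\<in>UNIV. margX q x) = (\<Sum>z\<in>UNIV. q z)"
  unfolding margX_def by (rule sum_pair[symmetric])

lemma sum_margY: "(\<Sum>y\<in>UNIV. margY q y) = (\<Sum>z\<in>UNIV. q z)"
  unfolding margY_def sum_pair[of q] by (rule sum.swap)

lemma margY_dist: "is_dist q \<Longrightarrow> is_dist (margY q)"
  unfolding is_dist_def using sum_margY[of q] by (auto simp: margY_def intro!: sum_nonneg)

lemma margX_dist: "is_dist q \<Longrightarrow> is_dist (margX q)"
  unfolding is_dist_def using sum_margX[of q] by (auto simp: margX_def intro!: sum_nonneg)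

lemma sum_gb: "(\<Sum>y\<in>UNIV. gb \<alpha> W qY x y) = (if LP_inner \<alpha> W qY x = 0 then 0 else 1)"
  unfolding gb_def by (simp add: sum_divide_distrib[symmetric] LP_inner_def[symmetric])

lemma gb_nonneg: "0 \<le> gb \<alpha> W qY x y"
  unfolding gb_def using inner_nonneg[of \<alpha> W qY x] by simp

lemma qbX_nonneg: "\<forall>x. 0 \<le> pX x \<Longrightarrow> 0 < LP_norm \<alpha> pX W qY \<Longrightarrow> 0 \<le> qbX \<alpha> pX W qY x"
  unfolding qbX_def by simp

lemma sum_qbX: "0 < LP_norm \<alpha> pX W qY \<Longrightarrow> (\<Sum>x\<in>UNIV. qbX \<alpha> pX W qY x) = 1"
  unfolding qbX_def by (simp add: sum_divide_distrib[symmetric] LP_norm_def[symmetric])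

lemma margX_step:
  "margX (LP_step \<alpha> pX W qY) x = qbX \<alpha> pX W qY x"
proof -
  have "margX (LP_step \<alpha> pX W qY) x = qbX \<alpha> pX W qY x * (\<Sum>y\<in>UNIV. gb \<alpha> W qY x y)"
    unfolding margX_def step_eq by (simp add: sum_distrib_left)
  also have "\<dots> = qbX \<alpha> pX W qY x"
    by (simp add: sum_gb qbX_def)
  finally show ?thesis .
qed

lemma step_dist:
  assumes "\<forall>x. 0 \<le> pX x" "0 < LP_norm \<alpha> pX W qY"
  shows "is_dist (LP_step \<alpha> pX W qY)"
  unfolding is_dist_def
proof
  show "\<forall>z. 0 \<le> LP_step \<alpha> pX W qY z"
    using assms by (auto simp: step_eq intro!: mult_nonneg_nonneg qbX_nonneg gb_nonneg)
  have "(\<Sum>z\<in>UNIV. LP_step \<alpha> pX W qY z) = (\<Sum>x\<in>UNIV. margX (LP_step \<alpha> pX W qY) x)"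
    by (simp add: sum_margX)
  also have "\<dots> = 1" using assms by (simp add: margX_step sum_qbX)
  finally show "(\<Sum>z\<in>UNIV. LP_step \<alpha> pX W qY z) = 1" .
qed

lemma norm_pos_iff:
  assumes "\<forall>x. 0 \<le> pX x" "\<forall>x y. 0 \<le> W x y" "\<forall>y. 0 \<le> qY y" "0 < \<alpha>"
  shows "0 < LP_norm \<alpha> pX W qY \<longleftrightarrow> (\<exists>x y. 0 < pX x \<and> 0 < W x y \<and> 0 < qY y)"
proof
  assume "0 < LP_norm \<alpha> pX W qY"
  then obtain x where x: "pX x * LP_inner \<alpha> W qY x powr (1 / \<alpha>) \<noteq> 0"
    unfolding LP_norm_def by (metis (mono_tags, lifting) less_irrefl sum.neutral)
  then have "pX x \<noteq> 0" "LP_inner \<alpha> W qY x \<noteq> 0" by auto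
  then obtain y where "W x y powr \<alpha> * qY y powr (1 - \<alpha>) \<noteq> 0"
    unfolding LP_inner_def by (metis (mono_tags, lifting) sum.neutral)
  then show "\<exists>x y. 0 < pX x \<and> 0 < W x y \<and> 0 < qY y"
    using assms \<open>pX x \<noteq> 0\<close> by (metis order_less_le powr_eq_0_iff mult_eq_0_iff)
next
  assume "\<exists>x y. 0 < pX x \<and> 0 < W x y \<and> 0 < qY y"
  then obtain x y where xy: "0 < pX x" "0 < W x y" "0 < qY y" by blast
  then have "0 < pX x * LP_inner \<alpha> W qY x powr (1 / \<alpha>)"
    using inner_pos[of W x y qY \<alpha>] assms by simp
  also have "\<dots> \<le> LP_norm \<alpha> pX W qY" unfolding LP_norm_def
    by (rule member_le_sum[where f="\<lambda>x. pX x * LP_inner \<alpha> W qY x powr (1 / \<alpha>)"])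
       (use assms inner_nonneg in auto)
  finally show "0 < LP_norm \<alpha> pX W qY" .
qed

lemma step_norm_pos:
  assumes "\<forall>x. 0 \<le> pX x" "\<forall>x y. 0 \<le> W x y" "\<forall>y. 0 \<le> qY y" "0 < \<alpha>"
    and N: "0 < LP_norm \<alpha> pX W qY"
  shows "0 < LP_norm \<alpha> pX W (margY (LP_step \<alpha> pX W qY))"
proof -
  obtain x y where xy: "0 < pX x" "0 < W x y" "0 < qY y"
    using N norm_pos_iff assms by blast
  have Z: "0 < LP_inner \<alpha> W qY x" using inner_pos[of W x y qY \<alpha>] assms xy by simp
  have "0 < LP_step \<alpha> pX W qY (x, y)"
    using xy Z N by (simp add: step_eq qbX_def gb_def)
  also have "\<dots> \<le> margY (LP_step \<alpha> pX W qY) y"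
    using step_dist[OF assms(1) N] by (intro margY_ge) (simp add: is_dist_def)
  finally have "0 < margY (LP_step \<alpha> pX W qY) y" .
  moreover have "\<forall>y. 0 \<le> margY (LP_step \<alpha> pX W qY) y"
    using margY_dist[OF step_dist[OF assms(1) N]] by (simp add: is_dist_def)
  ultimately show ?thesis using norm_pos_iff assms xy by blast
qed

lemma pw:
  fixes \<alpha> q a w y p Z N :: real
  assumes "0 < \<alpha>" "\<alpha> < 1" "0 < q" "0 < a" "0 < w" "0 < y" "0 < p" "0 < Z" "0 < N"
  shows "\<alpha> / (1 - \<alpha>) * ln (q / (a * w)) + ln (q / (a * y)) + \<alpha> / (1 - \<alpha>) * ln (a / p)
    = 1 / (1 - \<alpha>) * (ln (q / (a * (w powr \<alpha> * y powr (1 - \<alpha>) / Z)))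
        + \<alpha> * ln (a / (p * Z powr (1 / \<alpha>) / N))) - \<alpha> / (1 - \<alpha>) * ln N"
proof -
  have e1: "ln (q / (a * w)) = ln q - ln a - ln w" using assms by (simp add: ln_div ln_mult)
  have e2: "ln (q / (a * y)) = ln q - ln a - ln y" using assms by (simp add: ln_div ln_mult)
  have e3: "ln (a / p) = ln a - ln p" using assms by (simp add: ln_div)
  have e4: "ln (q / (a * (w powr \<alpha> * y powr (1 - \<alpha>) / Z))) = ln q - ln a - \<alpha> * ln w - (1 - \<alpha>) * ln y + ln Z"
    using assms by (simp add: ln_div ln_mult)
  have e5: "ln (a / (p * Z powr (1 / \<alpha>) / N)) = ln a - ln p - (1 / \<alpha>) * ln Z + ln N"
    using assms by (simp add: ln_div ln_mult)
  have na: "1 - \<alpha> \<noteq> 0" "\<alpha> \<noteq> 0" using assms by auto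
  show ?thesis unfolding e1 e2 e3 e4 e5 using na by (simp add: divide_simps) (simp add: algebra_simps)
qed

lemma ereal_inf_sum:
  assumes "a \<noteq> -\<infinity>" "b \<noteq> -\<infinity>" "d \<noteq> -\<infinity>" "a = \<infinity> \<or> b = \<infinity> \<or> d = \<infinity>" "0 < c"
  shows "ereal c * a + b + ereal c * d = \<infinity>"
  using assms by (cases a; cases b; cases d) auto

lemma F_decomp:
  fixes q :: "'x::finite \<times> 'y::finite \<Rightarrow> real" and pX :: "'x \<Rightarrow> real" and W :: "'x \<Rightarrow> 'y \<Rightarrow> real"
  assumes a: "0 < \<alpha>" "\<alpha> < 1" and q: "is_dist q" and p: "\<forall>x. 0 \<le> pX x"
    and W: "\<forall>x y. 0 \<le> W x y" and Y: "\<forall>y. 0 \<le> qY y" and N: "0 < LP_norm \<alpha> pX W qY"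
    and C: "\<forall>x y. q (x, y) \<noteq> 0 \<longrightarrow> W x y \<noteq> 0 \<and> qY y \<noteq> 0 \<and> pX x \<noteq> 0"
  shows "F_LP \<alpha> pX W q qY = ereal (1 / (1 - \<alpha>) *
      ((\<Sum>z\<in>UNIV. q z * ln (q z / (margX q (fst z) * gb \<alpha> W qY (fst z) (snd z))))
       + \<alpha> * (\<Sum>z\<in>UNIV. q z * ln (margX q (fst z) / qbX \<alpha> pX W qY (fst z))))
      - \<alpha> / (1 - \<alpha>) * ln (LP_norm \<alpha> pX W qY))"
proof -
  define qX where "qX = margX q"
  define NN where "NN = LP_norm \<alpha> pX W qY"
  define c where "c = \<alpha> / (1 - \<alpha>)"
  have q0: "\<forall>z. 0 \<le> q z" and q1: "(\<Sum>z\<in>UNIV. q z) = 1" using q by (auto simp: is_dist_def)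
  have pos: "0 < q z \<and> 0 < qX (fst z) \<and> 0 < W (fst z) (snd z) \<and> 0 < qY (snd z) \<and> 0 < pX (fst z)
      \<and> 0 < LP_inner \<alpha> W qY (fst z)" if "q z \<noteq> 0" for z
  proof -
    obtain x y where z: "z = (x, y)" by (cases z)
    have "0 < q (x, y)" using q0 that z by (metis order_less_le)
    moreover have "q (x, y) \<le> qX x" unfolding qX_def using q0 by (rule margX_ge)
    moreover have "0 < W x y" "0 < qY y" "0 < pX x" using C that z W Y p by (metis order_less_le)+
    moreover have "0 < LP_inner \<alpha> W qY x" using inner_pos[of W x y qY \<alpha>] W Y calculation by simp
    ultimately show ?thesis using z by simp
  qed
  have K1: "KL q (\<lambda>(x, y). margX q x * W x y) = ereal (\<Sum>z\<in>UNIV. q z * ln (q z / (qX (fst z) * W (fst z) (snd z))))"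
  proof -
    have "\<forall>z. q z \<noteq> 0 \<longrightarrow> (\<lambda>(x, y). qX x * W x y) z \<noteq> 0"
    proof (intro allI impI)
      fix z assume "q z \<noteq> 0" from pos[OF this] show "(\<lambda>(x, y). qX x * W x y) z \<noteq> 0" by (simp add: case_prod_beta)
    qed
    then show ?thesis unfolding qX_def[symmetric] by (subst KL_fin) (auto simp: case_prod_beta)
  qed
  have K2: "KL q (\<lambda>(x, y). margX q x * qY y) = ereal (\<Sum>z\<in>UNIV. q z * ln (q z / (qX (fst z) * qY (snd z))))"
  proof -
    have "\<forall>z. q z \<noteq> 0 \<longrightarrow> (\<lambda>(x, y). qX x * qY y) z \<noteq> 0"
    proof (intro allI impI)
      fix z assume "q z \<noteq> 0" from pos[OF this] show "(\<lambda>(x, y). qX x * qY y) z \<noteq> 0" by (simp add: case_prod_beta)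
    qed
    then show ?thesis unfolding qX_def[symmetric] by (subst KL_fin) (auto simp: case_prod_beta)
  qed
  have supX: "pX x \<noteq> 0" if nz: "qX x \<noteq> 0" for x
  proof -
    obtain y where "q (x, y) \<noteq> 0" using nz unfolding qX_def margX_def
      by (metis (mono_tags, lifting) sum.neutral)
    then show ?thesis using pos[of "(x, y)"] by simp
  qed
  have K3: "KL (margX q) pX = ereal (\<Sum>x\<in>UNIV. qX x * ln (qX x / pX x))"
    unfolding qX_def[symmetric] by (subst KL_fin) (use supX in auto)
  have k3: "(\<Sum>x\<in>UNIV. qX x * ln (qX x / pX x)) = (\<Sum>z\<in>UNIV. q z * ln (qX (fst z) / pX (fst z)))"
  proof -
    have "(\<Sum>z\<in>UNIV. q z * ln (qX (fst z) / pX (fst z))) = (\<Sum>x\<in>UNIV. \<Sum>y\<in>UNIV. q (x, y) * ln (qX x / pX x))"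
      by (subst sum_pair) simp
    also have "\<dots> = (\<Sum>x\<in>UNIV. qX x * ln (qX x / pX x))"
      unfolding qX_def margX_def by (simp add: sum_distrib_right)
    finally show ?thesis by simp
  qed
  define l1 where "l1 z = ln (q z / (qX (fst z) * W (fst z) (snd z)))" for z
  define l2 where "l2 z = ln (q z / (qX (fst z) * qY (snd z)))" for z
  define l3 where "l3 z = ln (qX (fst z) / pX (fst z))" for z :: "'x \<times> 'y"
  define g1 where "g1 z = ln (q z / (qX (fst z) * gb \<alpha> W qY (fst z) (snd z)))" for z
  define g2 where "g2 z = ln (qX (fst z) / qbX \<alpha> pX W qY (fst z))" for z :: "'x \<times> 'y"
  have "F_LP \<alpha> pX W q qY = ereal (c * (\<Sum>z\<in>UNIV. q z * l1 z) + (\<Sum>z\<in>UNIV. q z * l2 z) + c * (\<Sum>z\<in>UNIV. q z * l3 z))"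
    unfolding F_LP_def K1 K2 K3 k3 l1_def l2_def l3_def c_def by simp
  also have "c * (\<Sum>z\<in>UNIV. q z * l1 z) + (\<Sum>z\<in>UNIV. q z * l2 z) + c * (\<Sum>z\<in>UNIV. q z * l3 z)
      = (\<Sum>z\<in>UNIV. q z * (c * l1 z + l2 z + c * l3 z))"
    by (simp add: distrib_left sum.distrib sum_distrib_left mult.left_commute)
  also have "\<dots> = (\<Sum>z\<in>UNIV. q z * (1 / (1 - \<alpha>) * (g1 z + \<alpha> * g2 z) - c * ln NN))"
  proof (rule sum.cong[OF refl])
    fix z
    show "q z * (c * l1 z + l2 z + c * l3 z) = q z * (1 / (1 - \<alpha>) * (g1 z + \<alpha> * g2 z) - c * ln NN)"
    proof (cases "q z = 0")
      case False
      note P = pos[OF False]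
      have "c * l1 z + l2 z + c * l3 z = 1 / (1 - \<alpha>) * (g1 z + \<alpha> * g2 z) - c * ln NN"
        unfolding l1_def l2_def l3_def g1_def g2_def c_def gb_def qbX_def NN_def
        by (rule pw) (use a P N in auto)
      then show ?thesis by simp
    qed simp
  qed
  also have "\<dots> = 1 / (1 - \<alpha>) * ((\<Sum>z\<in>UNIV. q z * g1 z) + \<alpha> * (\<Sum>z\<in>UNIV. q z * g2 z)) - c * ln NN * (\<Sum>z\<in>UNIV. q z)"
    by (simp add: algebra_simps sum_subtractf sum.distrib sum_distrib_left sum_distrib_right)
  finally show ?thesis unfolding q1 g1_def g2_def qX_def NN_def c_def by simp
qed

lemma F_lower:
  fixes q :: "'x::finite \<times> 'y::finite \<Rightarrow> real" and pX :: "'x \<Rightarrow> real" and W :: "'x \<Rightarrow> 'y \<Rightarrow> real"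
  assumes a: "0 < \<alpha>" "\<alpha> < 1" and q: "is_dist q" and p: "is_dist pX"
    and W: "\<forall>x y. 0 \<le> W x y" and Y: "\<forall>y. 0 \<le> qY y" and N: "0 < LP_norm \<alpha> pX W qY"
  shows "ereal (- (\<alpha> / (1 - \<alpha>)) * ln (LP_norm \<alpha> pX W qY)) \<le> F_LP \<alpha> pX W q qY"
proof (cases "\<forall>x y. q (x, y) \<noteq> 0 \<longrightarrow> W x y \<noteq> 0 \<and> qY y \<noteq> 0 \<and> pX x \<noteq> 0")
  case False
  then obtain x y where xy: "q (x, y) \<noteq> 0" "W x y = 0 \<or> qY y = 0 \<or> pX x = 0" by blast
  have q0: "\<forall>z. 0 \<le> q z" using q by (simp add: is_dist_def)
  have mx: "margX q x \<noteq> 0" using margX_ge[OF q0, of x y] xy(1) q0 by (metis order_less_le order_less_le_trans)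
  have "KL q (\<lambda>(x, y). margX q x * W x y) = \<infinity> \<or> KL q (\<lambda>(x, y). margX q x * qY y) = \<infinity>
      \<or> KL (margX q) pX = \<infinity>"
    using xy KL_inf[of q "(x, y)"] KL_inf[of "margX q" x pX] mx by auto
  then have "F_LP \<alpha> pX W q qY = \<infinity>" unfolding F_LP_def
    by (intro ereal_inf_sum KL_nminf) (use a in auto)
  then show ?thesis by simp
next
  case True
  have pX0: "\<forall>x. 0 \<le> pX x" using p by (simp add: is_dist_def)
  have q0: "\<forall>z. 0 \<le> q z" and q1: "(\<Sum>z\<in>UNIV. q z) = 1" using q by (auto simp: is_dist_def)
  define qX where "qX = margX q"
  have qX0: "0 \<le> qX x" for x unfolding qX_def using q0 by (rule margX_nonneg)
  have pos: "0 < q z \<and> 0 < qX (fst z) \<and> 0 < W (fst z) (snd z) \<and> 0 < qY (snd z) \<and> 0 < pX (fst z)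
      \<and> 0 < LP_inner \<alpha> W qY (fst z)" if "q z \<noteq> 0" for z
  proof -
    obtain x y where z: "z = (x, y)" by (cases z)
    have "0 < q (x, y)" using q0 that z by (metis order_less_le)
    moreover have "q (x, y) \<le> qX x" unfolding qX_def using q0 by (rule margX_ge)
    moreover have "0 < W x y" "0 < qY y" "0 < pX x" using True that z W Y pX0 by (metis order_less_le)+
    moreover have "0 < LP_inner \<alpha> W qY x" using inner_pos[of W x y qY \<alpha>] W Y calculation by simp
    ultimately show ?thesis using z by simp
  qed
  have G1: "0 \<le> (\<Sum>z\<in>UNIV. q z * ln (q z / (qX (fst z) * gb \<alpha> W qY (fst z) (snd z))))"
  proof (rule gibbs)
    show "\<forall>z. 0 \<le> q z" by (rule q0)
    show "\<forall>z. 0 \<le> qX (fst z) * gb \<alpha> W qY (fst z) (snd z)" by (intro allI mult_nonneg_nonneg qX0 gb_nonneg)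
    show "\<forall>z. q z \<noteq> 0 \<longrightarrow> qX (fst z) * gb \<alpha> W qY (fst z) (snd z) \<noteq> 0"
    proof (intro allI impI)
      fix z assume nz: "q z \<noteq> 0"
      from pos[OF nz] show "qX (fst z) * gb \<alpha> W qY (fst z) (snd z) \<noteq> 0" by (simp add: gb_def)
    qed
    have "(\<Sum>z\<in>UNIV. qX (fst z) * gb \<alpha> W qY (fst z) (snd z)) = (\<Sum>x\<in>UNIV. qX x * (\<Sum>y\<in>UNIV. gb \<alpha> W qY x y))"
      by (subst sum_pair) (simp add: sum_distrib_left)
    also have "\<dots> \<le> (\<Sum>x\<in>UNIV. qX x)"
      by (intro sum_mono) (use qX0 in \<open>auto simp: sum_gb\<close>)
    also have "\<dots> = (\<Sum>z\<in>UNIV. q z)" unfolding qX_def by (rule sum_margX)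
    finally show "(\<Sum>z\<in>UNIV. qX (fst z) * gb \<alpha> W qY (fst z) (snd z)) \<le> (\<Sum>z\<in>UNIV. q z)" .
  qed
  have qbpos: "qbX \<alpha> pX W qY (fst z) \<noteq> 0" if "q z \<noteq> 0" for z
    using pos[OF that] N by (simp add: qbX_def)
  have G2: "0 \<le> (\<Sum>z\<in>UNIV. q z * ln (qX (fst z) / qbX \<alpha> pX W qY (fst z)))"
  proof -
    have "(\<Sum>z\<in>UNIV. q z * ln (qX (fst z) / qbX \<alpha> pX W qY (fst z)))
        = (\<Sum>z\<in>UNIV. q z * ln (q z / (qbX \<alpha> pX W qY (fst z) * q z / qX (fst z))))"
    proof (rule sum.cong[OF refl])
      fix z show "q z * ln (qX (fst z) / qbX \<alpha> pX W qY (fst z)) =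
          q z * ln (q z / (qbX \<alpha> pX W qY (fst z) * q z / qX (fst z)))"
      proof (cases "q z = 0")
        case False
        then have "q z / (qbX \<alpha> pX W qY (fst z) * q z / qX (fst z)) = qX (fst z) / qbX \<alpha> pX W qY (fst z)"
          using pos[OF False] qbpos[OF False] by (simp add: field_simps)
        then show ?thesis by simp
      qed simp
    qed
    also have "0 \<le> \<dots>"
    proof (rule gibbs)
      show "\<forall>z. 0 \<le> q z" by (rule q0)
      show "\<forall>z. 0 \<le> qbX \<alpha> pX W qY (fst z) * q z / qX (fst z)"
        using qX0 q0 qbX_nonneg[OF pX0 N] by (simp add: mult_nonneg_nonneg)
      show "\<forall>z. q z \<noteq> 0 \<longrightarrow> qbX \<alpha> pX W qY (fst z) * q z / qX (fst z) \<noteq> 0"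
      proof (intro allI impI)
        fix z assume nz: "q z \<noteq> 0"
        from pos[OF nz] qbpos[OF nz] nz show "qbX \<alpha> pX W qY (fst z) * q z / qX (fst z) \<noteq> 0" by simp
      qed
      have "(\<Sum>z\<in>UNIV. qbX \<alpha> pX W qY (fst z) * q z / qX (fst z))
          = (\<Sum>x\<in>UNIV. qbX \<alpha> pX W qY x * (\<Sum>y\<in>UNIV. q (x, y)) / qX x)"
        by (subst sum_pair) (simp add: sum_distrib_left sum_divide_distrib)
      also have "\<dots> \<le> (\<Sum>x\<in>UNIV. qbX \<alpha> pX W qY x)"
      proof (intro sum_mono)
        fix x
        have "(\<Sum>y\<in>UNIV. q (x, y)) = qX x" by (simp add: qX_def margX_def)
        then show "qbX \<alpha> pX W qY x * (\<Sum>y\<in>UNIV. q (x, y)) / qX x \<le> qbX \<alpha> pX W qY x"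
          using qbX_nonneg[OF pX0 N, of x] by (cases "qX x = 0") auto
      qed
      also have "\<dots> = (\<Sum>z\<in>UNIV. q z)" using sum_qbX[OF N] q1 by simp
      finally show "(\<Sum>z\<in>UNIV. qbX \<alpha> pX W qY (fst z) * q z / qX (fst z)) \<le> (\<Sum>z\<in>UNIV. q z)" .
    qed
    finally show ?thesis .
  qed
  have "0 \<le> 1 / (1 - \<alpha>) * ((\<Sum>z\<in>UNIV. q z * ln (q z / (qX (fst z) * gb \<alpha> W qY (fst z) (snd z))))
       + \<alpha> * (\<Sum>z\<in>UNIV. q z * ln (qX (fst z) / qbX \<alpha> pX W qY (fst z))))"
    using G1 G2 a by (intro mult_nonneg_nonneg add_nonneg_nonneg) auto
  then show ?thesis
    unfolding F_decomp[OF a q pX0 W Y N True] qX_def[symmetric] by simp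
qed

lemma F_step:
  fixes pX :: "'x::finite \<Rightarrow> real" and W :: "'x \<Rightarrow> 'y::finite \<Rightarrow> real"
  assumes a: "0 < \<alpha>" "\<alpha> < 1" and p: "\<forall>x. 0 \<le> pX x"
    and W: "\<forall>x y. 0 \<le> W x y" and Y: "\<forall>y. 0 \<le> qY y" and N: "0 < LP_norm \<alpha> pX W qY"
  shows "F_LP \<alpha> pX W (LP_step \<alpha> pX W qY) qY = ereal (- (\<alpha> / (1 - \<alpha>)) * ln (LP_norm \<alpha> pX W qY))"
proof -
  let ?q = "LP_step \<alpha> pX W qY"
  have C: "\<forall>x y. ?q (x, y) \<noteq> 0 \<longrightarrow> W x y \<noteq> 0 \<and> qY y \<noteq> 0 \<and> pX x \<noteq> 0"
    by (auto simp: step_eq qbX_def gb_def)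
  have G1: "(\<Sum>z\<in>UNIV. ?q z * ln (?q z / (margX ?q (fst z) * gb \<alpha> W qY (fst z) (snd z)))) = 0"
  proof (rule sum.neutral, rule ballI)
    fix z
    show "?q z * ln (?q z / (margX ?q (fst z) * gb \<alpha> W qY (fst z) (snd z))) = 0"
    proof (cases "?q z = 0")
      case False
      then have "?q z / (margX ?q (fst z) * gb \<alpha> W qY (fst z) (snd z)) = 1"
        by (simp add: margX_step step_eq)
      then show ?thesis by simp
    qed simp
  qed
  have G2: "(\<Sum>z\<in>UNIV. ?q z * ln (margX ?q (fst z) / qbX \<alpha> pX W qY (fst z))) = 0"
  proof (rule sum.neutral, rule ballI)
    fix z
    show "?q z * ln (margX ?q (fst z) / qbX \<alpha> pX W qY (fst z)) = 0"
    proof (cases "?q z = 0")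
      case False
      then have "qbX \<alpha> pX W qY (fst z) \<noteq> 0" by (simp add: step_eq)
      then show ?thesis by (simp add: margX_step)
    qed simp
  qed
  show ?thesis
    unfolding F_decomp[OF a step_dist[OF p N] p W Y N C] G1 G2 by simp
qed

lemma F_marg:
  fixes q :: "'x::finite \<times> 'y::finite \<Rightarrow> real" and pX :: "'x \<Rightarrow> real" and W :: "'x \<Rightarrow> 'y \<Rightarrow> real"
  assumes q: "is_dist q" and Y: "is_dist qY"
  shows "F_LP \<alpha> pX W q (margY q) \<le> F_LP \<alpha> pX W q qY"
proof -
  have q0: "\<forall>z. 0 \<le> q z" using q by (simp add: is_dist_def)
  have Y0: "\<forall>y. 0 \<le> qY y" and Y1: "(\<Sum>y\<in>UNIV. qY y) = 1" using Y by (auto simp: is_dist_def)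
  define mY where "mY = margY q"
  define qX where "qX = margX q"
  have K: "KL q (\<lambda>(x, y). margX q x * margY q y) \<le> KL q (\<lambda>(x, y). margX q x * qY y)"
  proof (cases "\<exists>z. q z \<noteq> 0 \<and> (\<lambda>(x, y). margX q x * qY y) z = 0")
    case True
    then obtain z where "q z \<noteq> 0" "(\<lambda>(x, y). margX q x * qY y) z = 0" by blast
    then have "KL q (\<lambda>(x, y). margX q x * qY y) = \<infinity>" by (rule KL_inf)
    then show ?thesis by simp
  next
    case False
    have pos: "0 < q z \<and> 0 < qX (fst z) \<and> 0 < qY (snd z) \<and> 0 < mY (snd z)" if nz: "q z \<noteq> 0" for z
    proof -
      obtain x y where z: "z = (x, y)" by (cases z)
      have "0 < q (x, y)" using q0 nz z by (metis order_less_le)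
      moreover have "q (x, y) \<le> qX x" unfolding qX_def using q0 by (rule margX_ge)
      moreover have "q (x, y) \<le> mY y" unfolding mY_def using q0 by (rule margY_ge)
      moreover have "qY y \<noteq> 0" using False nz z by auto
      ultimately show ?thesis using z Y0 by (simp add: order_less_le)
    qed
    have s1: "\<forall>z. q z \<noteq> 0 \<longrightarrow> (\<lambda>(x, y). margX q x * qY y) z \<noteq> 0" using False by blast
    have s2: "\<forall>z. q z \<noteq> 0 \<longrightarrow> (\<lambda>(x, y). margX q x * margY q y) z \<noteq> 0"
    proof (intro allI impI)
      fix z assume nz: "q z \<noteq> 0"
      from pos[OF nz] show "(\<lambda>(x, y). margX q x * margY q y) z \<noteq> 0"
        by (simp add: case_prod_beta qX_def mY_def)
    qed
    have "(\<Sum>z\<in>UNIV. q z * ln (q z / (qX (fst z) * mY (snd z))))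
        \<le> (\<Sum>z\<in>UNIV. q z * ln (q z / (qX (fst z) * qY (snd z))))"
    proof -
      have "(\<Sum>z\<in>UNIV. q z * ln (q z / (qX (fst z) * qY (snd z)))) - (\<Sum>z\<in>UNIV. q z * ln (q z / (qX (fst z) * mY (snd z))))
          = (\<Sum>z\<in>UNIV. q z * ln (q z / (q z * qY (snd z) / mY (snd z))))"
        unfolding sum_subtractf[symmetric]
      proof (rule sum.cong[OF refl])
        fix z show "q z * ln (q z / (qX (fst z) * qY (snd z))) - q z * ln (q z / (qX (fst z) * mY (snd z)))
            = q z * ln (q z / (q z * qY (snd z) / mY (snd z)))"
        proof (cases "q z = 0")
          case False
          note P = pos[OF False]
          have "ln (q z / (qX (fst z) * qY (snd z))) - ln (q z / (qX (fst z) * mY (snd z)))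
              = ln (q z / (q z * qY (snd z) / mY (snd z)))"
            using P by (simp add: ln_div ln_mult)
          then show ?thesis by (simp add: right_diff_distrib[symmetric])
        qed simp
      qed
      also have "0 \<le> \<dots>"
      proof (rule gibbs)
        show "\<forall>z. 0 \<le> q z" by (rule q0)
        have mY0: "0 \<le> mY y" for y unfolding mY_def margY_def using q0 by (intro sum_nonneg) auto
        show "\<forall>z. 0 \<le> q z * qY (snd z) / mY (snd z)" using q0 Y0 mY0 by simp
        show "\<forall>z. q z \<noteq> 0 \<longrightarrow> q z * qY (snd z) / mY (snd z) \<noteq> 0"
        proof (intro allI impI)
          fix z assume nz: "q z \<noteq> 0"
          from pos[OF nz] nz show "q z * qY (snd z) / mY (snd z) \<noteq> 0" by simp
        qed
        have "(\<Sum>z\<in>UNIV. q z * qY (snd z) / mY (snd z)) = (\<Sum>y\<in>UNIV. \<Sum>x\<in>UNIV. q (x, y) * qY y / mY y)"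
          by (subst sum_pair) (simp only: snd_conv, rule sum.swap)
        also have "\<dots> = (\<Sum>y\<in>UNIV. mY y * qY y / mY y)"
          unfolding mY_def margY_def by (simp add: sum_distrib_right sum_divide_distrib)
        also have "\<dots> \<le> (\<Sum>y\<in>UNIV. qY y)"
          by (intro sum_mono) (use Y0 in auto)
        finally show "(\<Sum>z\<in>UNIV. q z * qY (snd z) / mY (snd z)) \<le> (\<Sum>z\<in>UNIV. q z)"
          using Y1 q by (simp add: is_dist_def)
      qed
      finally show ?thesis by simp
    qed
    then show ?thesis
      unfolding KL_fin[OF s1] KL_fin[OF s2] by (simp add: case_prod_beta qX_def mY_def)
  qed
  show ?thesis unfolding F_LP_def
    by (intro add_mono order_refl K)
qed

lemma pw2:
  fixes \<alpha> p Z N :: real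
  assumes a: "0 < \<alpha>" "\<alpha> < 1" and p: "0 \<le> p" and Z: "0 \<le> Z" and N: "0 < N"
  shows "p powr \<alpha> * (p * Z powr (1 / \<alpha>) / N) powr (1 - \<alpha>) * Z = p * Z powr (1 / \<alpha>) * N powr (\<alpha> - 1)"
proof (cases "p = 0 \<or> Z = 0")
  case True then show ?thesis by auto
next
  case False
  then have pp: "0 < p" and zp: "0 < Z" using p Z by auto
  have l: "0 < p powr \<alpha> * (p * Z powr (1 / \<alpha>) / N) powr (1 - \<alpha>) * Z" using pp zp N by simp
  have r: "0 < p * Z powr (1 / \<alpha>) * N powr (\<alpha> - 1)" using pp zp N by simp
  have "ln (p powr \<alpha> * (p * Z powr (1 / \<alpha>) / N) powr (1 - \<alpha>) * Z)
      = \<alpha> * ln p + (1 - \<alpha>) * (ln p + (1 / \<alpha>) * ln Z - ln N) + ln Z"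
    using pp zp N by (simp add: ln_mult ln_div)
  also have "\<dots> = ln p + (1 / \<alpha>) * ln Z + (\<alpha> - 1) * ln N"
    using a by (simp add: field_simps)
  also have "\<dots> = ln (p * Z powr (1 / \<alpha>) * N powr (\<alpha> - 1))"
    using pp zp N by (simp add: ln_mult)
  finally show ?thesis using l r by simp
qed

lemma I_bound:
  fixes pX :: "'x::finite \<Rightarrow> real" and W :: "'x \<Rightarrow> 'y::finite \<Rightarrow> real"
  assumes a: "0 < \<alpha>" "\<alpha> < 1" and p: "is_dist pX"
    and W: "\<forall>x y. 0 \<le> W x y" and Y: "is_dist qY" and N: "0 < LP_norm \<alpha> pX W qY"
  shows "I_LP \<alpha> pX W \<le> ereal (- (\<alpha> / (1 - \<alpha>)) * ln (LP_norm \<alpha> pX W qY))"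
proof -
  define NN where "NN = LP_norm \<alpha> pX W qY"
  have pX0: "\<forall>x. 0 \<le> pX x" using p by (simp add: is_dist_def)
  have Y0: "\<forall>y. 0 \<le> qY y" using Y by (simp add: is_dist_def)
  have qb: "is_dist (qbX \<alpha> pX W qY)"
    unfolding is_dist_def using qbX_nonneg[OF pX0 N] sum_qbX[OF N] by auto
  have S: "(\<Sum>z\<in>UNIV. (\<lambda>(x, y). pX x * W x y) z powr \<alpha> * (\<lambda>(x, y). qbX \<alpha> pX W qY x * qY y) z powr (1 - \<alpha>))
      = NN powr \<alpha>"
  proof -
    have "(\<Sum>z\<in>UNIV. (\<lambda>(x, y). pX x * W x y) z powr \<alpha> * (\<lambda>(x, y). qbX \<alpha> pX W qY x * qY y) z powr (1 - \<alpha>))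
        = (\<Sum>x\<in>UNIV. \<Sum>y\<in>UNIV. pX x powr \<alpha> * qbX \<alpha> pX W qY x powr (1 - \<alpha>) * (W x y powr \<alpha> * qY y powr (1 - \<alpha>)))"
      by (subst sum_pair) (simp add: powr_mult mult_ac)
    also have "\<dots> = (\<Sum>x\<in>UNIV. pX x powr \<alpha> * qbX \<alpha> pX W qY x powr (1 - \<alpha>) * LP_inner \<alpha> W qY x)"
      by (simp add: LP_inner_def sum_distrib_left)
    also have "\<dots> = (\<Sum>x\<in>UNIV. pX x * LP_inner \<alpha> W qY x powr (1 / \<alpha>) * NN powr (\<alpha> - 1))"
      unfolding qbX_def NN_def
      by (intro sum.cong refl pw2) (use a pX0 N inner_nonneg in auto)
    also have "\<dots> = NN * NN powr (\<alpha> - 1)"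
      by (simp add: NN_def LP_norm_def sum_distrib_right)
    also have "\<dots> = NN powr \<alpha>"
      using powr_add[of NN 1 "\<alpha> - 1"] N by (simp add: NN_def)
    finally show ?thesis .
  qed
  have "I_LP \<alpha> pX W \<le> renyi_div \<alpha> (\<lambda>(x, y). pX x * W x y) (\<lambda>(x, y). qbX \<alpha> pX W qY x * qY y)"
    unfolding I_LP_def
    by (rule INF_lower2[of "qbX \<alpha> pX W qY"]) (use qb Y in \<open>auto intro: INF_lower\<close>)
  also have "\<dots> = ereal (1 / (\<alpha> - 1) * ln (NN powr \<alpha>))"
    unfolding renyi_div_def S Let_def using N by (simp add: NN_def)
  also have "1 / (\<alpha> - 1) * ln (NN powr \<alpha>) = - (\<alpha> / (1 - \<alpha>)) * ln NN"
    using N a by (simp add: NN_def field_simps)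
  finally show ?thesis by (simp add: NN_def)
qed

theorem lemma5:
  fixes \<alpha> :: real and pX :: "'x::finite \<Rightarrow> real" and W :: "'x \<Rightarrow> 'y::finite \<Rightarrow> real"
    and q0 :: "'x \<times> 'y \<Rightarrow> real"
  assumes "0 < \<alpha>" "\<alpha> < 1"
    and "is_dist pX" and "is_channel W" and "is_dist q0"
    and "LP_norm \<alpha> pX W (margY q0) > 0"
  shows "\<forall>k. F_LP \<alpha> pX W (LP_iter \<alpha> pX W q0 k) (margY (LP_iter \<alpha> pX W q0 k))
               \<ge> F_LP \<alpha> pX W (LP_iter \<alpha> pX W q0 (Suc k)) (margY (LP_iter \<alpha> pX W q0 k))
          \<and> F_LP \<alpha> pX W (LP_iter \<alpha> pX W q0 (Suc k)) (margY (LP_iter \<alpha> pX W q0 k))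
               \<ge> F_LP \<alpha> pX W (LP_iter \<alpha> pX W q0 (Suc k)) (margY (LP_iter \<alpha> pX W q0 (Suc k)))
          \<and> F_LP \<alpha> pX W (LP_iter \<alpha> pX W q0 k) (margY (LP_iter \<alpha> pX W q0 k)) \<ge> I_LP \<alpha> pX W"
proof
  fix k
  have a: "0 < \<alpha>" "\<alpha> < 1" using assms by auto
  have pX0: "\<forall>x. 0 \<le> pX x" using assms(3) by (simp add: is_dist_def)
  have W0: "\<forall>x y. 0 \<le> W x y" using assms(4) by (simp add: is_channel_def is_dist_def)
  have inv: "is_dist (LP_iter \<alpha> pX W q0 n) \<and> 0 < LP_norm \<alpha> pX W (margY (LP_iter \<alpha> pX W q0 n))" for n
  proof (induction n)
    case 0 then show ?case using assms by simp
  next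
    case (Suc n)
    then have d: "is_dist (margY (LP_iter \<alpha> pX W q0 n))" and N: "0 < LP_norm \<alpha> pX W (margY (LP_iter \<alpha> pX W q0 n))"
      using margY_dist by auto
    have Y0: "\<forall>y. 0 \<le> margY (LP_iter \<alpha> pX W q0 n) y" using d by (simp add: is_dist_def)
    show ?case using step_dist[OF pX0 N] step_norm_pos[OF pX0 W0 Y0 a(1) N] by simp
  qed
  define Y where "Y = margY (LP_iter \<alpha> pX W q0 k)"
  have d: "is_dist Y" and N: "0 < LP_norm \<alpha> pX W Y" using inv[of k] margY_dist by (auto simp: Y_def)
  have Y0: "\<forall>y. 0 \<le> Y y" using d by (simp add: is_dist_def)
  have s: "LP_iter \<alpha> pX W q0 (Suc k) = LP_step \<alpha> pX W Y" by (simp add: Y_def)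
  have low: "ereal (- (\<alpha> / (1 - \<alpha>)) * ln (LP_norm \<alpha> pX W Y)) \<le> F_LP \<alpha> pX W (LP_iter \<alpha> pX W q0 k) Y"
    by (rule F_lower[OF a inv[THEN conjunct1] assms(3) W0 Y0 N])
  have 1: "F_LP \<alpha> pX W (LP_iter \<alpha> pX W q0 (Suc k)) Y \<le> F_LP \<alpha> pX W (LP_iter \<alpha> pX W q0 k) Y"
    unfolding s F_step[OF a pX0 W0 Y0 N] by (rule low)
  have 2: "F_LP \<alpha> pX W (LP_iter \<alpha> pX W q0 (Suc k)) (margY (LP_iter \<alpha> pX W q0 (Suc k)))
      \<le> F_LP \<alpha> pX W (LP_iter \<alpha> pX W q0 (Suc k)) Y"
    by (rule F_marg[OF inv[THEN conjunct1] d])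
  have 3: "I_LP \<alpha> pX W \<le> F_LP \<alpha> pX W (LP_iter \<alpha> pX W q0 k) Y"
    using I_bound[OF a assms(3) W0 d N] low by (rule order_trans)
  show "F_LP \<alpha> pX W (LP_iter \<alpha> pX W q0 k) (margY (LP_iter \<alpha> pX W q0 k))
               \<ge> F_LP \<alpha> pX W (LP_iter \<alpha> pX W q0 (Suc k)) (margY (LP_iter \<alpha> pX W q0 k))
          \<and> F_LP \<alpha> pX W (LP_iter \<alpha> pX W q0 (Suc k)) (margY (LP_iter \<alpha> pX W q0 k))
               \<ge> F_LP \<alpha> pX W (LP_iter \<alpha> pX W q0 (Suc k)) (margY (LP_iter \<alpha> pX W q0 (Suc k)))
          \<and> F_LP \<alpha> pX W (LP_iter \<alpha> pX W q0 k) (margY (LP_iter \<alpha> pX W q0 k)) \<ge> I_LP \<alpha> pX W"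
    using 1 2 3 unfolding Y_def by blast
qed

end
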